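(* Let $(A,\cdot,[-,-,-],\varepsilon)$ be a ternary Leibniz-Poisson color algebra. Then $A\otimes A$, graded by $(A\otimes A)_c=\bigoplus_{a+b=c}A_a\otimes A_b$, is a Leibniz-Poisson color algebra with the operations defined on homogeneous tensors by $$(x\otimes y)\cdot(x'\otimes y'):=\varepsilon(y,x')\,(x\cdot x')\otimes(y\cdot y'),\qquad [x\otimes y,x'\otimes y']:=x\otimes[y,x',y']+\varepsilon(y,x'+y')\,[x,x',y']\otimes y,$$ extended bilinearly.
   Context: $G$ is an abelian group, $\mathbb{K}$ a field of characteristic $\neq 2$, $\mathcal{H}(V)$ the homogeneous elements of a $G$-graded space $V$; even maps preserve degree. A skew-symmetric bicharacter $\varepsilon:G\times G\to\mathbb{K}^*$ satisfies $\varepsilon(a,b)\varepsilon(b,a)=1$, $\varepsilon(a,b+c)=\varepsilon(a,b)\varepsilon(a,c)$, $\varepsilon(a+b,c)=\varepsilon(a,c)\varepsilon(b,c)$; $\varepsilon(x,y)$ means $\varepsilon$ of the degrees. A Leibniz-Poisson color algebra $(P,\cdot,[-,-],\varepsilon)$ is a $G$-graded space with even bilinear maps $\cdot$ and $[-,-]$ such that $(P,\cdot)$ is associative, $[[x,y],z]=[x,[y,z]]+\varepsilon(y,z)[[x,z],y]$, and $[x\cdot y,z]=x\cdot[y,z]+\varepsilon(y,z)[x,z]\cdot y$ for all homogeneous $x,y,z$. A ternary Leibniz-Poisson color algebra $(A,\cdot,[-,-,-],\varepsilon)$ is a $G$-graded space with an even associative product $\cdot$ and an even trilinear $[-,-,-]$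 such that $[[x,y,z],t,u]=[x,y,[z,t,u]]+\varepsilon(z,t+u)[x,[y,t,u],z]+\varepsilon(y+z,t+u)[[x,t,u],y,z]$ and $[x\cdot y,z,t]=x\cdot[y,z,t]+\varepsilon(y,z+t)[x,z,t]\cdot y$ for all homogeneous $x,y,z,t,u$. *)

theory Defs
  imports Complex_Main
begin

definition bilinear_map ::
  "('k::field \<Rightarrow> 'a::ab_group_add \<Rightarrow> 'a) \<Rightarrow> ('k \<Rightarrow> 'b::ab_group_add \<Rightarrow> 'b) \<Rightarrow> ('a \<Rightarrow> 'a \<Rightarrow> 'b) \<Rightarrow> bool" where
  "bilinear_map s t f \<longleftrightarrow>
     (\<forall>y. Vector_Spaces.linear s t (\<lambda>x. f x y)) \<and> (\<forall>x. Vector_Spaces.linear s t (\<lambda>y. f x y))"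

definition trilinear_map ::
  "('k::field \<Rightarrow> 'a::ab_group_add \<Rightarrow> 'a) \<Rightarrow> ('k \<Rightarrow> 'b::ab_group_add \<Rightarrow> 'b) \<Rightarrow> ('a \<Rightarrow> 'a \<Rightarrow> 'a \<Rightarrow> 'b) \<Rightarrow> bool" where
  "trilinear_map s t f \<longleftrightarrow>
     (\<forall>y z. Vector_Spaces.linear s t (\<lambda>x. f x y z)) \<and>
     (\<forall>x z. Vector_Spaces.linear s t (\<lambda>y. f x y z)) \<and>
     (\<forall>x y. Vector_Spaces.linear s t (\<lambda>z. f x y z))"

definition graded_space :: "('k::field \<Rightarrow> 'v::ab_group_add \<Rightarrow> 'v) \<Rightarrow> ('g \<Rightarrow> 'v set) \<Rightarrow> bool" where
  "graded_space s V \<longleftrightarrow>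
     vector_space s \<and>
     (\<forall>g. module.subspace s (V g)) \<and>
     (\<forall>v. \<exists>f. finite {g. f g \<noteq> 0} \<and> (\<forall>g. f g \<in> V g) \<and> v = (\<Sum>g\<in>{g. f g \<noteq> 0}. f g)) \<and>
     (\<forall>f. finite {g. f g \<noteq> 0} \<and> (\<forall>g. f g \<in> V g) \<and> (\<Sum>g\<in>{g. f g \<noteq> 0}. f g) = 0 \<longrightarrow> (\<forall>g. f g = 0))"

definition even2 :: "('g::ab_group_add \<Rightarrow> 'v set) \<Rightarrow> ('v \<Rightarrow> 'v \<Rightarrow> 'v) \<Rightarrow> bool" where
  "even2 V m \<longleftrightarrow> (\<forall>a b x y. x \<in> V a \<longrightarrow> y \<in> V b \<longrightarrow> m x y \<in> V (a + b))"

definition even3 :: "('g::ab_group_add \<Rightarrow> 'v set) \<Rightarrow> ('v \<Rightarrow> 'v \<Rightarrow> 'v \<Rightarrow> 'v) \<Rightarrow> bool" where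
  "even3 V m \<longleftrightarrow> (\<forall>a b c x y z. x \<in> V a \<longrightarrow> y \<in> V b \<longrightarrow> z \<in> V c \<longrightarrow> m x y z \<in> V (a + b + c))"

definition skew_bicharacter :: "('g::ab_group_add \<Rightarrow> 'g \<Rightarrow> 'k::field) \<Rightarrow> bool" where
  "skew_bicharacter \<epsilon> \<longleftrightarrow>
     (\<forall>a b. \<epsilon> a b * \<epsilon> b a = 1) \<and>
     (\<forall>a b c. \<epsilon> a (b + c) = \<epsilon> a b * \<epsilon> a c) \<and>
     (\<forall>a b c. \<epsilon> (a + b) c = \<epsilon> a c * \<epsilon> b c)"

definition LP_color_algebra ::
  "('k::field \<Rightarrow> 'v::ab_group_add \<Rightarrow> 'v) \<Rightarrow> ('g::ab_group_add \<Rightarrow> 'v set) \<Rightarrow>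
   ('v \<Rightarrow> 'v \<Rightarrow> 'v) \<Rightarrow> ('v \<Rightarrow> 'v \<Rightarrow> 'v) \<Rightarrow> ('g \<Rightarrow> 'g \<Rightarrow> 'k) \<Rightarrow> bool" where
  "LP_color_algebra s V mul br \<epsilon> \<longleftrightarrow>
     graded_space s V \<and>
     bilinear_map s s mul \<and> even2 V mul \<and>
     bilinear_map s s br \<and> even2 V br \<and>
     (\<forall>x y z. mul (mul x y) z = mul x (mul y z)) \<and>
     (\<forall>a b c x y z. x \<in> V a \<longrightarrow> y \<in> V b \<longrightarrow> z \<in> V c \<longrightarrow>
        br (br x y) z = br x (br y z) + s (\<epsilon> b c) (br (br x z) y)) \<and>
     (\<forall>a b c x y z. x \<in> V a \<longrightarrow> y \<in> V b \<longrightarrow> z \<in> V c \<longrightarrow>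
        br (mul x y) z = mul x (br y z) + s (\<epsilon> b c) (mul (br x z) y))"

definition ternary_LP_color_algebra ::
  "('k::field \<Rightarrow> 'v::ab_group_add \<Rightarrow> 'v) \<Rightarrow> ('g::ab_group_add \<Rightarrow> 'v set) \<Rightarrow>
   ('v \<Rightarrow> 'v \<Rightarrow> 'v) \<Rightarrow> ('v \<Rightarrow> 'v \<Rightarrow> 'v \<Rightarrow> 'v) \<Rightarrow> ('g \<Rightarrow> 'g \<Rightarrow> 'k) \<Rightarrow> bool" where
  "ternary_LP_color_algebra s V mul br \<epsilon> \<longleftrightarrow>
     graded_space s V \<and>
     bilinear_map s s mul \<and> even2 V mul \<and>
     trilinear_map s s br \<and> even3 V br \<and>
     (\<forall>x y z. mul (mul x y) z = mul x (mul y z)) \<and>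
     (\<forall>a b c d e x y z t u. x \<in> V a \<longrightarrow> y \<in> V b \<longrightarrow> z \<in> V c \<longrightarrow> t \<in> V d \<longrightarrow> u \<in> V e \<longrightarrow>
        br (br x y z) t u = br x y (br z t u) + s (\<epsilon> c (d + e)) (br x (br y t u) z)
                            + s (\<epsilon> (b + c) (d + e)) (br (br x t u) y z)) \<and>
     (\<forall>a b c d x y z t. x \<in> V a \<longrightarrow> y \<in> V b \<longrightarrow> z \<in> V c \<longrightarrow> t \<in> V d \<longrightarrow>
        br (mul x y) z t = mul x (br y z t) + s (\<epsilon> b (c + d)) (mul (br x z t) y))"

(* Together
   with uniqueness this forces range tp to span T and T to be isomorphic
   to the usual tensor product. *)
definition tensor_product ::
  "('k::field \<Rightarrow> 'a::ab_group_add \<Rightarrow> 'a) \<Rightarrow> ('k \<Rightarrow> 't::ab_group_add \<Rightarrow> 't) \<Rightarrow> ('a \<Rightarrow> 'a \<Rightarrow> 't) \<Rightarrow> bool" where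
  "tensor_product s t tp \<longleftrightarrow>
     vector_space s \<and> vector_space t \<and> bilinear_map s t tp \<and>
     (\<forall>f :: 'a \<Rightarrow> 'a \<Rightarrow> 'k. bilinear_map s (*) f \<longrightarrow>
        (\<exists>!g. Vector_Spaces.linear t (*) g \<and> (\<forall>x y. g (tp x y) = f x y)))"

definition tensor_grading ::
  "('k::field \<Rightarrow> 't::ab_group_add \<Rightarrow> 't) \<Rightarrow> ('g::ab_group_add \<Rightarrow> 'a set) \<Rightarrow> ('a \<Rightarrow> 'a \<Rightarrow> 't) \<Rightarrow> 'g \<Rightarrow> 't set" where
  "tensor_grading t V tp c = module.span t {tp x y | x y a b. x \<in> V a \<and> y \<in> V b \<and> a + b = c}"

end

theory Submission
  imports Defs
begin


lemma bilinear_mapD: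
  assumes "bilinear_map s t f"
  shows "f (x + y) z = f x z + f y z" "f (s c x) z = t c (f x z)"
        "f z (x + y) = f z x + f z y" "f z (s c x) = t c (f z x)"
  using assms unfolding bilinear_map_def Vector_Spaces.linear_iff by auto

lemma trilinear_mapD:
  assumes "trilinear_map s t f"
  shows "f (x + y) z w = f x z w + f y z w" "f (s c x) z w = t c (f x z w)"
        "f z (x + y) w = f z x w + f z y w" "f z (s c x) w = t c (f z x w)"
        "f z w (x + y) = f z w x + f z w y" "f z w (s c x) = t c (f z w x)"
  using assms unfolding trilinear_map_def Vector_Spaces.linear_iff by auto

lemma bil_span:
  fixes f :: "'a::ab_group_add \<Rightarrow> 'a \<Rightarrow> 'b::ab_group_add"
    and s1 :: "'k::field \<Rightarrow> 'a \<Rightarrow> 'a" and s2 :: "'k \<Rightarrow> 'b \<Rightarrow> 'b"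
  assumes vs1: "vector_space s1" and vs2: "vector_space s2" and f: "bilinear_map s1 s2 f"
    and W: "module.subspace s2 W" and gen: "\<And>a b. a \<in> X \<Longrightarrow> b \<in> Y \<Longrightarrow> f a b \<in> W"
    and x: "x \<in> module.span s1 X" and y: "y \<in> module.span s1 Y"
  shows "f x y \<in> W"
proof -
  interpret v1: vector_space s1 by fact
  interpret v2: vector_space s2 by fact
  note L = bilinear_mapD[OF f]
  have z1: "f 0 b = 0" for b using L(1)[where x=0 and y=0 and z=b] by simp
  have z2: "f a 0 = 0" for a using L(3)[where x=0 and y=0 and z=a] by simp
  have 1: "f a y \<in> W" if a: "a \<in> X" for a
  proof (rule v1.span_induct[OF y, where P="\<lambda>y. f a y \<in> W"])
    show "v1.subspace {y. f a y \<in> W}"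
      by (rule v1.subspaceI) (auto simp: z2 L v2.subspace_0[OF W] v2.subspace_add[OF W] v2.subspace_scale[OF W])
    show "f a b \<in> W" if "b \<in> Y" for b using gen that a by blast
  qed
  show ?thesis
  proof (rule v1.span_induct[OF x, where P="\<lambda>x. f x y \<in> W"])
    show "v1.subspace {x. f x y \<in> W}"
      by (rule v1.subspaceI) (auto simp: z1 L v2.subspace_0[OF W] v2.subspace_add[OF W] v2.subspace_scale[OF W])
    show "f a y \<in> W" if "a \<in> X" for a using 1 that by blast
  qed
qed

locale tlp =
  fixes s :: "'k::field \<Rightarrow> 'a::ab_group_add \<Rightarrow> 'a"
    and V :: "'g::ab_group_add \<Rightarrow> 'a set"
    and mul :: "'a \<Rightarrow> 'a \<Rightarrow> 'a"
    and br :: "'a \<Rightarrow> 'a \<Rightarrow> 'a \<Rightarrow> 'a"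
    and \<epsilon> :: "'g \<Rightarrow> 'g \<Rightarrow> 'k"
    and t :: "'k \<Rightarrow> 't::ab_group_add \<Rightarrow> 't"
    and tp :: "'a \<Rightarrow> 'a \<Rightarrow> 't"
  assumes eps: "skew_bicharacter \<epsilon>"
    and A: "ternary_LP_color_algebra s V mul br \<epsilon>"
    and T: "tensor_product s t tp"
begin

lemma vsS: "vector_space s" using A unfolding ternary_LP_color_algebra_def graded_space_def by auto
lemma vsT: "vector_space t" using T unfolding tensor_product_def by auto

lemma vsK: "vector_space ((*) :: 'k \<Rightarrow> 'k \<Rightarrow> 'k)" by unfold_locales (auto simp: algebra_simps)

sublocale S: vector_space s by (rule vsS)
sublocale TT: vector_space t by (rule vsT)
sublocale ST: vector_space_pair s t by unfold_locales (auto simp: algebra_simps)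
sublocale TK: vector_space_pair t "(*)" by unfold_locales (auto simp: algebra_simps)
sublocale SK: vector_space_pair s "(*)" by unfold_locales (auto simp: algebra_simps)
sublocale T2: vector_space_pair t t by unfold_locales (auto simp: algebra_simps)

lemma gradedA: "graded_space s V" using A unfolding ternary_LP_color_algebra_def by auto
lemma subV: "S.subspace (V g)" using gradedA unfolding graded_space_def by auto
lemma mul_bil: "bilinear_map s s mul" using A unfolding ternary_LP_color_algebra_def by auto
lemma br_tril: "trilinear_map s s br" using A unfolding ternary_LP_color_algebra_def by auto
lemma tp_bil: "bilinear_map s t tp" using T unfolding tensor_product_def by auto
lemma mul_deg: "x \<in> V a \<Longrightarrow> y \<in> V b \<Longrightarrow> mul x y \<in> V (a + b)"
  using A unfolding ternary_LP_color_algebra_def even2_def by auto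
lemma br_deg: "x \<in> V a \<Longrightarrow> y \<in> V b \<Longrightarrow> z \<in> V c \<Longrightarrow> br x y z \<in> V (a + b + c)"
  using A unfolding ternary_LP_color_algebra_def even3_def by auto
lemma mul_assoc: "mul (mul x y) z = mul x (mul y z)"
  using A unfolding ternary_LP_color_algebra_def by auto
lemma br_id: "x \<in> V a \<Longrightarrow> y \<in> V b \<Longrightarrow> z \<in> V c \<Longrightarrow> w \<in> V d \<Longrightarrow> u \<in> V e \<Longrightarrow>
   br (br x y z) w u = br x y (br z w u) + s (\<epsilon> c (d + e)) (br x (br y w u) z)
                            + s (\<epsilon> (b + c) (d + e)) (br (br x w u) y z)"
  using A unfolding ternary_LP_color_algebra_def by blast
lemma br_mul: "x \<in> V a \<Longrightarrow> y \<in> V b \<Longrightarrow> z \<in> V c \<Longrightarrow> w \<in> V d \<Longrightarrow>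
        br (mul x y) z w = mul x (br y z w) + s (\<epsilon> b (c + d)) (mul (br x z w) y)"
  using A unfolding ternary_LP_color_algebra_def by blast

lemmas mul_lin = bilinear_mapD[OF mul_bil]
lemmas br_lin = trilinear_mapD[OF br_tril]
lemmas tp_lin = bilinear_mapD[OF tp_bil]

lemma eps_r: "\<epsilon> a (b + c) = \<epsilon> a b * \<epsilon> a c" using eps unfolding skew_bicharacter_def by auto
lemma eps_l: "\<epsilon> (a + b) c = \<epsilon> a c * \<epsilon> b c" using eps unfolding skew_bicharacter_def by auto
lemma eps_sk: "\<epsilon> a b * \<epsilon> b a = 1" using eps unfolding skew_bicharacter_def by auto

lemma tp_univ: "bilinear_map s (*) f \<Longrightarrow> \<exists>!g. Vector_Spaces.linear t (*) g \<and> (\<forall>x y. g (tp x y) = f x y)"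
  using T unfolding tensor_product_def by auto

lemma graded_decomp0: "\<forall>v. \<exists>f. finite {g. f g \<noteq> 0} \<and> (\<forall>g. f g \<in> V g) \<and> v = (\<Sum>g\<in>{g. f g \<noteq> 0}. f g)"
  using gradedA unfolding graded_space_def by (elim conjE) assumption
lemma graded_decomp: "\<exists>f. finite {g. f g \<noteq> 0} \<and> (\<forall>g. f g \<in> V g) \<and> v = (\<Sum>g\<in>{g. f g \<noteq> 0}. f g)"
  using graded_decomp0 by (rule spec)
lemma graded_direct0: "\<forall>f. finite {g. f g \<noteq> 0} \<and> (\<forall>g. f g \<in> V g) \<and> (\<Sum>g\<in>{g. f g \<noteq> 0}. f g) = 0 \<longrightarrow> (\<forall>g. f g = 0)"
  using gradedA unfolding graded_space_def by (elim conjE) assumption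
lemma graded_direct: "finite {g. f g \<noteq> 0} \<Longrightarrow> (\<forall>g. f g \<in> V g) \<Longrightarrow> (\<Sum>g\<in>{g. f g \<noteq> 0}. f g) = 0 \<Longrightarrow> f g = 0"
proof -
  assume "finite {g. f g \<noteq> 0}" "\<forall>g. f g \<in> V g" "(\<Sum>g\<in>{g. f g \<noteq> 0}. f g) = 0"
  then show "f g = 0" using graded_direct0[rule_format, of f] by blast
qed

lemma deg_unique:
  assumes xa: "x \<in> V a" and xb: "x \<in> V b" and nz: "x \<noteq> 0" shows "a = b"
proof (rule ccontr)
  assume ab: "a \<noteq> b"
  define f where "f g = (if g = a then x else if g = b then - x else 0)" for g
  have supp: "{g. f g \<noteq> 0} = {a, b}" using ab nz by (auto simp: f_def)
  have "\<forall>g. f g \<in> V g"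
  proof
    fix g show "f g \<in> V g"
      using xa xb S.subspace_neg[OF subV[of b] xb] S.subspace_0[OF subV[of g]] by (simp add: f_def)
  qed
  moreover have "(\<Sum>g\<in>{g. f g \<noteq> 0}. f g) = 0" unfolding supp using ab by (simp add: f_def)
  moreover have "finite {g. f g \<noteq> 0}" unfolding supp by simp
  ultimately have "f a = 0" by (metis graded_direct)
  then show False using nz by (simp add: f_def)
qed

definition Bg :: "'g \<Rightarrow> 'a set" where
  "Bg g = (SOME B. B \<subseteq> V g \<and> S.independent B \<and> V g \<subseteq> S.span B)"

lemma Bg: "Bg g \<subseteq> V g" "S.independent (Bg g)" "S.span (Bg g) = V g"
proof -
  obtain B where "B \<subseteq> V g" "S.independent B" "V g \<subseteq> S.span B"
    using S.maximal_independent_subset by blast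
  then have "Bg g \<subseteq> V g \<and> S.independent (Bg g) \<and> V g \<subseteq> S.span (Bg g)"
    unfolding Bg_def using someI[of "\<lambda>B. B \<subseteq> V g \<and> S.independent B \<and> V g \<subseteq> S.span B" B] by blast
  then show "Bg g \<subseteq> V g" "S.independent (Bg g)" "S.span (Bg g) = V g"
    using S.span_minimal[OF _ subV] by auto
qed

definition BA :: "'a set" where "BA = (\<Union>g. Bg g)"
definition deg :: "'a \<Rightarrow> 'g" where "deg b = (SOME g. b \<in> Bg g)"

lemma deg_in: "b \<in> BA \<Longrightarrow> b \<in> Bg (deg b)"
  unfolding BA_def deg_def by (auto intro: someI)

lemma Bg_nz: "b \<in> Bg g \<Longrightarrow> b \<noteq> 0"
  using Bg(2) S.dependent_zero by blast

lemma deg_eq: "b \<in> Bg g \<Longrightarrow> deg b = g"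
proof -
  assume b: "b \<in> Bg g"
  then have "b \<in> BA" unfolding BA_def by auto
  then have "b \<in> Bg (deg b)" by (rule deg_in)
  then show "deg b = g" using b Bg(1) Bg_nz deg_unique by blast
qed

lemma BA_hom: "b \<in> BA \<Longrightarrow> b \<in> V (deg b)"
  using deg_in Bg(1) by blast

lemma BA_nz: "b \<in> BA \<Longrightarrow> b \<noteq> 0"
  using deg_in Bg_nz by blast

lemma V_span: "V a = S.span {b \<in> BA. deg b = a}"
proof -
  have "{b \<in> BA. deg b = a} = Bg a"
  proof (intro set_eqI iffI)
    fix b assume "b \<in> {b \<in> BA. deg b = a}"
    then show "b \<in> Bg a" using deg_in by blast
  next
    fix b assume "b \<in> Bg a"
    then show "b \<in> {b \<in> BA. deg b = a}" using deg_eq unfolding BA_def by blast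
  qed
  then show ?thesis using Bg(3) by simp
qed

lemma BA_indep: "S.independent BA"
  unfolding S.independent_explicit_finite_subsets
proof (intro allI impI ballI)
  fix X u v0
  assume X: "X \<subseteq> BA" and fin: "finite X" and sum0: "(\<Sum>v\<in>X. s (u v) v) = 0" and v0: "v0 \<in> X"
  define F where "F g = (\<Sum>v\<in>{v\<in>X. deg v = g}. s (u v) v)" for g
  have FV: "\<forall>g. F g \<in> V g"
  proof
    fix g
    show "F g \<in> V g" unfolding F_def
      by (rule S.subspace_sum[OF subV]) (use X deg_in Bg(1) in \<open>auto intro!: S.subspace_scale[OF subV]\<close>)
  qed
  have supp: "{g. F g \<noteq> 0} \<subseteq> deg ` X"
  proof
    fix g assume g: "g \<in> {g. F g \<noteq> 0}"
    show "g \<in> deg ` X"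
    proof (rule ccontr)
      assume "g \<notin> deg ` X"
      then have "{v\<in>X. deg v = g} = {}" by auto
      then have "F g = 0" unfolding F_def by (simp only: sum.empty)
      then show False using g by simp
    qed
  qed
  have finF: "finite {g. F g \<noteq> 0}" using supp fin finite_subset by blast
  have "(\<Sum>g\<in>{g. F g \<noteq> 0}. F g) = (\<Sum>g\<in>deg ` X. F g)"
    by (rule sum.mono_neutral_left) (use supp fin in auto)
  also have "\<dots> = (\<Sum>v\<in>X. s (u v) v)"
    unfolding F_def by (rule sum.image_gen[symmetric]) (rule fin)
  finally have "(\<Sum>g\<in>{g. F g \<noteq> 0}. F g) = 0" using sum0 by simp
  then have "F (deg v0) = 0" using graded_direct[OF finF FV] by blast
  moreover have "{v\<in>X. deg v = deg v0} \<subseteq> Bg (deg v0)"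
  proof
    fix v assume "v \<in> {v\<in>X. deg v = deg v0}"
    then show "v \<in> Bg (deg v0)" using X deg_in[of v] by auto
  qed
  ultimately show "u v0 = 0"
    using S.independentD[where s="Bg (deg v0)" and t="{v\<in>X. deg v = deg v0}" and u=u and v=v0, OF Bg(2)] fin v0
    unfolding F_def by auto
qed

lemma BA_span: "S.span BA = UNIV"
proof -
  have "v \<in> S.span BA" for v
  proof -
    obtain f where f: "finite {g. f g \<noteq> 0}" "\<forall>g. f g \<in> V g" "v = (\<Sum>g\<in>{g. f g \<noteq> 0}. f g)"
      using graded_decomp by blast
    have "f g \<in> S.span BA" for g
      using f(2) Bg(3) S.span_mono[of "Bg g" BA] unfolding BA_def by auto
    then show ?thesis using f(3) by (auto intro: S.span_sum)
  qed
  then show ?thesis by auto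
qed

lemma tp_span_all: "TT.span {tp x y | x y. True} = UNIV"
proof (rule ccontr)
  let ?W = "TT.span {tp x y | x y. True}"
  assume "?W \<noteq> UNIV"
  then obtain v where v: "v \<notin> ?W" by auto
  obtain C where C: "C \<subseteq> ?W" "TT.independent C" "?W \<subseteq> TT.span C"
    using TT.maximal_independent_subset by blast
  have spC: "TT.span C \<subseteq> ?W" using TT.span_minimal[OF C(1) TT.subspace_span] .
  then have vC: "v \<notin> TT.span C" using v by auto
  have ind: "TT.independent (insert v C)" using TT.independent_insertI[OF vC C(2)] .
  define h where "h = TK.construct (insert v C) (\<lambda>e. if e = v then 1 else 0)"
  have lh: "Vector_Spaces.linear t (*) h" unfolding h_def by (rule TK.linear_construct[OF ind])
  have hv: "h v = 1" unfolding h_def using TK.construct_basis[OF ind, of v] by simp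
  have hW: "h w = 0" if "w \<in> ?W" for w
  proof -
    have "w \<in> TT.span C" using that C(3) by auto
    moreover have "h e = 0" if "e \<in> C" for e
    proof -
      have "e \<noteq> v" using that vC TT.span_base by blast
      then show ?thesis unfolding h_def using TK.construct_basis[OF ind, of e] that by simp
    qed
    ultimately show ?thesis using TK.linear_eq_on[OF lh TK.linear_zero, of w C] by simp
  qed
  have htp: "h (tp x y) = 0" for x y by (rule hW) (auto intro: TT.span_base)
  have bz: "bilinear_map s (*) (\<lambda>x y. 0::'k)" unfolding bilinear_map_def using SK.linear_zero by simp
  obtain g where gu: "\<And>g'. Vector_Spaces.linear t (*) g' \<Longrightarrow> (\<forall>x y. g' (tp x y) = 0) \<Longrightarrow> g' = g"
    using tp_univ[OF bz] by blast
  have "h = g" by (rule gu) (use lh htp in auto)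
  moreover have "(\<lambda>_. 0) = g" by (rule gu) (use TK.linear_zero in auto)
  ultimately have "h v = 0" by metis
  then show False using hv by simp
qed



abbreviation rep where "rep \<equiv> S.representation BA"

lemma rep_lin: "rep (x + y) b = rep x b + rep y b" "rep (s c x) b = c * rep x b"
  using S.linear_representation[OF BA_indep BA_span, of b] unfolding Vector_Spaces.linear_iff by blast+

lemma rep_basis: "c \<in> BA \<Longrightarrow> rep c b = (if b = c then 1 else 0)"
  using S.representation_basis[OF BA_indep] by simp

lemma coord_fun: "\<exists>g. Vector_Spaces.linear t (*) g \<and> (\<forall>x y. g (tp x y) = rep x b1 * rep y b2)"
proof -
  have a: "Vector_Spaces.linear s (*) (\<lambda>x. rep x b1 * c)" for c
    unfolding Vector_Spaces.linear_iff
  proof (intro conjI allI)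
    show "vector_space s" by (rule S.vector_space_axioms)
    show "vector_space ((*) :: 'k \<Rightarrow> 'k \<Rightarrow> 'k)" by (rule vsK)
    show "rep (x + y) b1 * c = rep x b1 * c + rep y b1 * c" for x y by (simp only: rep_lin distrib_right)
    show "rep (s a x) b1 * c = a * (rep x b1 * c)" for a x by (simp only: rep_lin mult.assoc)
  qed
  have b: "Vector_Spaces.linear s (*) (\<lambda>y. c * rep y b2)" for c
    unfolding Vector_Spaces.linear_iff
  proof (intro conjI allI)
    show "vector_space s" by (rule S.vector_space_axioms)
    show "vector_space ((*) :: 'k \<Rightarrow> 'k \<Rightarrow> 'k)" by (rule vsK)
    show "c * rep (x + y) b2 = c * rep x b2 + c * rep y b2" for x y by (simp only: rep_lin distrib_left)
    show "c * rep (s a x) b2 = a * (c * rep x b2)" for a x by (simp only: rep_lin mult.left_commute)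
  qed
  have "bilinear_map s (*) (\<lambda>x y. rep x b1 * rep y b2)"
    unfolding bilinear_map_def using a b by blast
  then show ?thesis by (rule ex1_implies_ex[OF tp_univ])
qed

lemma coord_basis:
  assumes "b1 \<in> BA" "b2 \<in> BA"
  obtains g where "Vector_Spaces.linear t (*) g"
    "\<And>c1 c2. c1 \<in> BA \<Longrightarrow> c2 \<in> BA \<Longrightarrow> g (tp c1 c2) = (if c1 = b1 \<and> c2 = b2 then 1 else 0)"
proof -
  obtain g where g1: "Vector_Spaces.linear t (*) g" and g2: "\<forall>x y. g (tp x y) = rep x b1 * rep y b2"
    using coord_fun by blast
  show ?thesis
  proof (rule that[OF g1])
    fix c1 c2 assume "c1 \<in> BA" "c2 \<in> BA"
    then show "g (tp c1 c2) = (if c1 = b1 \<and> c2 = b2 then 1 else 0)"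
      using g2 rep_basis[of c1 b1] rep_basis[of c2 b2] by auto
  qed
qed


lemma tp_inj: "b1 \<in> BA \<Longrightarrow> b2 \<in> BA \<Longrightarrow> c1 \<in> BA \<Longrightarrow> c2 \<in> BA \<Longrightarrow> tp b1 b2 = tp c1 c2 \<Longrightarrow> b1 = c1 \<and> b2 = c2"
proof -
  assume b: "b1 \<in> BA" "b2 \<in> BA" and c: "c1 \<in> BA" "c2 \<in> BA" and eq: "tp b1 b2 = tp c1 c2"
  obtain g :: "'t \<Rightarrow> 'k" where g: "\<And>c1 c2. c1 \<in> BA \<Longrightarrow> c2 \<in> BA \<Longrightarrow> g (tp c1 c2) = (if c1 = b1 \<and> c2 = b2 then 1 else 0)"
    by (rule coord_basis[OF b]) iprover
  have "g (tp c1 c2) = 1" using g[OF b] eq by simp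
  moreover have "(0::'k) \<noteq> 1" by simp
  ultimately show ?thesis using g[OF c] by (cases "c1 = b1 \<and> c2 = b2") auto
qed

definition BT :: "'t set" where "BT = {tp b1 b2 | b1 b2. b1 \<in> BA \<and> b2 \<in> BA}"

lemma BT_indep: "TT.independent BT"
  unfolding TT.independent_explicit_finite_subsets
proof (intro allI impI ballI)
  fix X u e0
  assume X: "X \<subseteq> BT" and fin: "finite X" and sum0: "(\<Sum>v\<in>X. t (u v) v) = 0" and e0: "e0 \<in> X"
  obtain b1 b2 where b: "b1 \<in> BA" "b2 \<in> BA" and e0d: "e0 = tp b1 b2" using e0 X unfolding BT_def by blast
  obtain g where lg: "Vector_Spaces.linear t (*) g"
     and g: "\<And>c1 c2. c1 \<in> BA \<Longrightarrow> c2 \<in> BA \<Longrightarrow> g (tp c1 c2) = (if c1 = b1 \<and> c2 = b2 then 1 else 0)"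
    by (rule coord_basis[OF b]) iprover
  have ge: "g e = (if e = e0 then 1 else 0)" if e: "e \<in> BT" for e
  proof -
    obtain c1 c2 where c: "c1 \<in> BA" "c2 \<in> BA" "e = tp c1 c2" using e unfolding BT_def by blast
    show ?thesis
    proof (cases "c1 = b1 \<and> c2 = b2")
      case True
      then show ?thesis using g[OF c(1,2)] c(3) e0d by simp
    next
      case False
      then have "e \<noteq> e0" using tp_inj[OF b c(1,2)] c(3) e0d by metis
      then show ?thesis using g[OF c(1,2)] c(3) False by simp
    qed
  qed
  have "0 = g (\<Sum>v\<in>X. t (u v) v)" using sum0 TK.linear_0[OF lg] by simp
  also have "\<dots> = (\<Sum>v\<in>X. u v * g v)" by (simp add: TK.linear_sum[OF lg] TK.linear_scale[OF lg])
  also have "\<dots> = (\<Sum>v\<in>X. if v = e0 then u e0 else 0)"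
  proof (rule sum.cong[OF refl])
    fix v assume "v \<in> X"
    then have "v \<in> BT" using X by blast
    then show "u v * g v = (if v = e0 then u e0 else 0)" using ge[of v] by simp
  qed
  also have "\<dots> = u e0" using fin e0 by simp
  finally show "u e0 = 0" by simp
qed

lemma BT_span: "TT.span BT = UNIV"
proof -
  have "tp x y \<in> TT.span BT" for x y
  proof (rule bil_span[OF vsS vsT tp_bil TT.subspace_span, of BA BA])
    show "tp a b \<in> TT.span BT" if "a \<in> BA" "b \<in> BA" for a b
      by (rule TT.span_base) (use that in \<open>unfold BT_def, blast\<close>)
    show "x \<in> S.span BA" "y \<in> S.span BA" using BA_span by simp_all
  qed
  then have "{tp x y | x y. True} \<subseteq> TT.span BT" by auto
  then have "TT.span {tp x y | x y. True} \<subseteq> TT.span BT" using TT.span_minimal TT.subspace_span by blast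
  then show ?thesis using tp_span_all by auto
qed




definition pr :: "'t \<Rightarrow> 'a \<times> 'a" where
  "pr e = (SOME p. p \<in> BA \<times> BA \<and> e = tp (fst p) (snd p))"

lemma pr_tp: "b1 \<in> BA \<Longrightarrow> b2 \<in> BA \<Longrightarrow> pr (tp b1 b2) = (b1, b2)"
proof -
  assume b: "b1 \<in> BA" "b2 \<in> BA"
  let ?P = "\<lambda>p. p \<in> BA \<times> BA \<and> tp b1 b2 = tp (fst p) (snd p)"
  have "?P (b1, b2)" using b by simp
  then have "?P (pr (tp b1 b2))" unfolding pr_def by (rule someI)
  then show ?thesis using tp_inj[OF b] by (cases "pr (tp b1 b2)") auto
qed

lemma bil_ext: "\<exists>M. bilinear_map t t M \<and> (\<forall>e\<in>BT. \<forall>e'\<in>BT. M e e' = h e e')"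
proof -
  define M where "M u w = T2.construct BT (\<lambda>e. T2.construct BT (h e) w) u" for u w
  have l1: "Vector_Spaces.linear t t (\<lambda>u. M u w)" for w
    unfolding M_def by (rule T2.linear_construct[OF BT_indep])
  have inner: "Vector_Spaces.linear t t (T2.construct BT (h e))" for e
    by (rule T2.linear_construct[OF BT_indep])
  have l2: "Vector_Spaces.linear t t (\<lambda>w. M u w)" for u
    unfolding Vector_Spaces.linear_iff
  proof (intro conjI allI)
    show "vector_space t" by (rule vsT)
    show "vector_space t" by (rule vsT)
    fix x y c
    have "M u (x + y) = T2.construct BT (\<lambda>e. T2.construct BT (h e) x + T2.construct BT (h e) y) u"
      unfolding M_def using T2.linear_add[OF inner] by simp
    also have "\<dots> = M u x + M u y" unfolding M_def by (rule T2.construct_add[OF BT_indep])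
    finally show "M u (x + y) = M u x + M u y" .
    have "M u (t c x) = T2.construct BT (\<lambda>e. t c (T2.construct BT (h e) x)) u"
      unfolding M_def using T2.linear_scale[OF inner] by simp
    also have "\<dots> = t c (M u x)" unfolding M_def by (rule T2.construct_scale[OF BT_indep])
    finally show "M u (t c x) = t c (M u x)" .
  qed
  have "M e e' = h e e'" if "e \<in> BT" "e' \<in> BT" for e e'
    unfolding M_def using T2.construct_basis[OF BT_indep that(1)] T2.construct_basis[OF BT_indep that(2)]
    by simp
  moreover have "bilinear_map t t M" unfolding bilinear_map_def using l1 l2 by blast
  ultimately show ?thesis by blast
qed

definition hmul :: "'t \<Rightarrow> 't \<Rightarrow> 't" where
  "hmul e e' = (case pr e of (b1, b2) \<Rightarrow> case pr e' of (c1, c2) \<Rightarrow>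
      t (\<epsilon> (deg b2) (deg c1)) (tp (mul b1 c1) (mul b2 c2)))"
definition hbr :: "'t \<Rightarrow> 't \<Rightarrow> 't" where
  "hbr e e' = (case pr e of (b1, b2) \<Rightarrow> case pr e' of (c1, c2) \<Rightarrow>
      tp b1 (br b2 c1 c2) + t (\<epsilon> (deg b2) (deg c1 + deg c2)) (tp (br b1 c1 c2) b2))"

definition mulT :: "'t \<Rightarrow> 't \<Rightarrow> 't" where
  "mulT = (SOME M. bilinear_map t t M \<and> (\<forall>e\<in>BT. \<forall>e'\<in>BT. M e e' = hmul e e'))"
definition brT :: "'t \<Rightarrow> 't \<Rightarrow> 't" where
  "brT = (SOME M. bilinear_map t t M \<and> (\<forall>e\<in>BT. \<forall>e'\<in>BT. M e e' = hbr e e'))"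

lemma mulT_prop: "bilinear_map t t mulT \<and> (\<forall>e\<in>BT. \<forall>e'\<in>BT. mulT e e' = hmul e e')"
  unfolding mulT_def by (rule someI_ex[OF bil_ext])
lemma brT_prop: "bilinear_map t t brT \<and> (\<forall>e\<in>BT. \<forall>e'\<in>BT. brT e e' = hbr e e')"
  unfolding brT_def by (rule someI_ex[OF bil_ext])

lemma mulT_bil: "bilinear_map t t mulT" using mulT_prop by blast
lemma brT_bil: "bilinear_map t t brT" using brT_prop by blast
lemmas mulT_lin = bilinear_mapD[OF mulT_bil]
lemmas brT_lin = bilinear_mapD[OF brT_bil]

lemma inBT: "b1 \<in> BA \<Longrightarrow> b2 \<in> BA \<Longrightarrow> tp b1 b2 \<in> BT" unfolding BT_def by blast

lemma mulT_basis: "b1 \<in> BA \<Longrightarrow> b2 \<in> BA \<Longrightarrow> c1 \<in> BA \<Longrightarrow> c2 \<in> BA \<Longrightarrow>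
  mulT (tp b1 b2) (tp c1 c2) = t (\<epsilon> (deg b2) (deg c1)) (tp (mul b1 c1) (mul b2 c2))"
  using mulT_prop inBT[of b1 b2] inBT[of c1 c2] by (simp add: hmul_def pr_tp)

lemma brT_basis: "b1 \<in> BA \<Longrightarrow> b2 \<in> BA \<Longrightarrow> c1 \<in> BA \<Longrightarrow> c2 \<in> BA \<Longrightarrow>
  brT (tp b1 b2) (tp c1 c2) = tp b1 (br b2 c1 c2) + t (\<epsilon> (deg b2) (deg c1 + deg c2)) (tp (br b1 c1 c2) b2)"
  using brT_prop inBT[of b1 b2] inBT[of c1 c2] by (simp add: hbr_def pr_tp)




lemma linST: "(\<And>x y. f (x + y) = f x + f y) \<Longrightarrow> (\<And>c x. f (s c x) = t c (f x)) \<Longrightarrow> Vector_Spaces.linear s t f"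
  unfolding Vector_Spaces.linear_iff using vsS vsT by blast

lemmas linsimps = tp_lin mul_lin br_lin mulT_lin brT_lin TT.scale_right_distrib TT.scale_scale

lemma mulT_hom:
  assumes x: "x \<in> V a" and y: "y \<in> V b" and x': "x' \<in> V a'" and y': "y' \<in> V b'"
  shows "mulT (tp x y) (tp x' y') = t (\<epsilon> b a') (tp (mul x x') (mul y y'))"
proof -
  define B where "B g = {b\<in>BA. deg b = g}" for g
  have VB: "V g = S.span (B g)" for g unfolding B_def by (rule V_span)
  have BB: "b \<in> B g \<Longrightarrow> b \<in> BA \<and> deg b = g" for b g unfolding B_def by blast
  have s4: "mulT (tp b1 b2) (tp c1 c2) = t (\<epsilon> b a') (tp (mul b1 c1) (mul b2 c2))"
    if "b1 \<in> B a" "b2 \<in> B b" "c1 \<in> B a'" "c2 \<in> B b'" for b1 b2 c1 c2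
    using mulT_basis[of b1 b2 c1 c2] BB[OF that(1)] BB[OF that(2)] BB[OF that(3)] BB[OF that(4)] by simp
  have s3: "mulT (tp b1 b2) (tp c1 y2) = t (\<epsilon> b a') (tp (mul b1 c1) (mul b2 y2))"
    if "b1 \<in> B a" "b2 \<in> B b" "c1 \<in> B a'" "y2 \<in> V b'" for b1 b2 c1 y2
  proof (rule ST.linear_eq_on[where f="\<lambda>y2. mulT (tp b1 b2) (tp c1 y2)"
        and g="\<lambda>y2. t (\<epsilon> b a') (tp (mul b1 c1) (mul b2 y2))"])
    show "y2 \<in> S.span (B b')" using that VB by simp
    show "Vector_Spaces.linear s t (\<lambda>y2. mulT (tp b1 b2) (tp c1 y2))" by (rule linST) (simp_all add: linsimps)
    show "Vector_Spaces.linear s t (\<lambda>y2. t (\<epsilon> b a') (tp (mul b1 c1) (mul b2 y2)))" by (rule linST) (simp_all add: linsimps mult.commute)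
  qed (use s4 that in auto)
  have s2: "mulT (tp b1 b2) (tp x2 y2) = t (\<epsilon> b a') (tp (mul b1 x2) (mul b2 y2))"
    if "b1 \<in> B a" "b2 \<in> B b" "x2 \<in> V a'" "y2 \<in> V b'" for b1 b2 x2 y2
  proof (rule ST.linear_eq_on[where f="\<lambda>x2. mulT (tp b1 b2) (tp x2 y2)"
        and g="\<lambda>x2. t (\<epsilon> b a') (tp (mul b1 x2) (mul b2 y2))"])
    show "x2 \<in> S.span (B a')" using that VB by simp
    show "Vector_Spaces.linear s t (\<lambda>x2. mulT (tp b1 b2) (tp x2 y2))" by (rule linST) (simp_all add: linsimps)
    show "Vector_Spaces.linear s t (\<lambda>x2. t (\<epsilon> b a') (tp (mul b1 x2) (mul b2 y2)))" by (rule linST) (simp_all add: linsimps mult.commute)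
  qed (use s3 that in auto)
  have s1: "mulT (tp b1 y1) (tp x2 y2) = t (\<epsilon> b a') (tp (mul b1 x2) (mul y1 y2))"
    if "b1 \<in> B a" "y1 \<in> V b" "x2 \<in> V a'" "y2 \<in> V b'" for b1 y1 x2 y2
  proof (rule ST.linear_eq_on[where f="\<lambda>y1. mulT (tp b1 y1) (tp x2 y2)"
        and g="\<lambda>y1. t (\<epsilon> b a') (tp (mul b1 x2) (mul y1 y2))"])
    show "y1 \<in> S.span (B b)" using that VB by simp
    show "Vector_Spaces.linear s t (\<lambda>y1. mulT (tp b1 y1) (tp x2 y2))" by (rule linST) (simp_all add: linsimps)
    show "Vector_Spaces.linear s t (\<lambda>y1. t (\<epsilon> b a') (tp (mul b1 x2) (mul y1 y2)))" by (rule linST) (simp_all add: linsimps mult.commute)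
  qed (use s2 that in auto)
  show ?thesis
  proof (rule ST.linear_eq_on[where f="\<lambda>x. mulT (tp x y) (tp x' y')"
        and g="\<lambda>x. t (\<epsilon> b a') (tp (mul x x') (mul y y'))"])
    show "x \<in> S.span (B a)" using x VB by simp
    show "Vector_Spaces.linear s t (\<lambda>x. mulT (tp x y) (tp x' y'))" by (rule linST) (simp_all add: linsimps)
    show "Vector_Spaces.linear s t (\<lambda>x. t (\<epsilon> b a') (tp (mul x x') (mul y y')))" by (rule linST) (simp_all add: linsimps mult.commute)
  qed (use s1 y x' y' in auto)
qed

lemma brT_hom:
  assumes x: "x \<in> V a" and y: "y \<in> V b" and x': "x' \<in> V a'" and y': "y' \<in> V b'"
  shows "brT (tp x y) (tp x' y') = tp x (br y x' y') + t (\<epsilon> b (a' + b')) (tp (br x x' y') y)"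
proof -
  define B where "B g = {b\<in>BA. deg b = g}" for g
  have VB: "V g = S.span (B g)" for g unfolding B_def by (rule V_span)
  have BB: "b \<in> B g \<Longrightarrow> b \<in> BA \<and> deg b = g" for b g unfolding B_def by blast
  have s4: "brT (tp b1 b2) (tp c1 c2) = tp b1 (br b2 c1 c2) + t (\<epsilon> b (a' + b')) (tp (br b1 c1 c2) b2)"
    if "b1 \<in> B a" "b2 \<in> B b" "c1 \<in> B a'" "c2 \<in> B b'" for b1 b2 c1 c2
    using brT_basis[of b1 b2 c1 c2] BB[OF that(1)] BB[OF that(2)] BB[OF that(3)] BB[OF that(4)] by simp
  have s3: "brT (tp b1 b2) (tp c1 y2) = tp b1 (br b2 c1 y2) + t (\<epsilon> b (a' + b')) (tp (br b1 c1 y2) b2)"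
    if "b1 \<in> B a" "b2 \<in> B b" "c1 \<in> B a'" "y2 \<in> V b'" for b1 b2 c1 y2
  proof (rule ST.linear_eq_on[where f="\<lambda>y2. brT (tp b1 b2) (tp c1 y2)"
        and g="\<lambda>y2. tp b1 (br b2 c1 y2) + t (\<epsilon> b (a' + b')) (tp (br b1 c1 y2) b2)"])
    show "y2 \<in> S.span (B b')" using that VB by simp
    show "Vector_Spaces.linear s t (\<lambda>y2. brT (tp b1 b2) (tp c1 y2))" by (rule linST) (simp_all add: linsimps)
    show "Vector_Spaces.linear s t (\<lambda>y2. tp b1 (br b2 c1 y2) + t (\<epsilon> b (a' + b')) (tp (br b1 c1 y2) b2))" by (rule linST) (simp_all add: linsimps mult.commute add_ac)
  qed (use s4 that in auto)
  have s2: "brT (tp b1 b2) (tp x2 y2) = tp b1 (br b2 x2 y2) + t (\<epsilon> b (a' + b')) (tp (br b1 x2 y2) b2)"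
    if "b1 \<in> B a" "b2 \<in> B b" "x2 \<in> V a'" "y2 \<in> V b'" for b1 b2 x2 y2
  proof (rule ST.linear_eq_on[where f="\<lambda>x2. brT (tp b1 b2) (tp x2 y2)"
        and g="\<lambda>x2. tp b1 (br b2 x2 y2) + t (\<epsilon> b (a' + b')) (tp (br b1 x2 y2) b2)"])
    show "x2 \<in> S.span (B a')" using that VB by simp
    show "Vector_Spaces.linear s t (\<lambda>x2. brT (tp b1 b2) (tp x2 y2))" by (rule linST) (simp_all add: linsimps)
    show "Vector_Spaces.linear s t (\<lambda>x2. tp b1 (br b2 x2 y2) + t (\<epsilon> b (a' + b')) (tp (br b1 x2 y2) b2))" by (rule linST) (simp_all add: linsimps mult.commute add_ac)
  qed (use s3 that in auto)
  have s1: "brT (tp b1 y1) (tp x2 y2) = tp b1 (br y1 x2 y2) + t (\<epsilon> b (a' + b')) (tp (br b1 x2 y2) y1)"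
    if "b1 \<in> B a" "y1 \<in> V b" "x2 \<in> V a'" "y2 \<in> V b'" for b1 y1 x2 y2
  proof (rule ST.linear_eq_on[where f="\<lambda>y1. brT (tp b1 y1) (tp x2 y2)"
        and g="\<lambda>y1. tp b1 (br y1 x2 y2) + t (\<epsilon> b (a' + b')) (tp (br b1 x2 y2) y1)"])
    show "y1 \<in> S.span (B b)" using that VB by simp
    show "Vector_Spaces.linear s t (\<lambda>y1. brT (tp b1 y1) (tp x2 y2))" by (rule linST) (simp_all add: linsimps)
    show "Vector_Spaces.linear s t (\<lambda>y1. tp b1 (br y1 x2 y2) + t (\<epsilon> b (a' + b')) (tp (br b1 x2 y2) y1))" by (rule linST) (simp_all add: linsimps mult.commute add_ac)
  qed (use s2 that in auto)
  show ?thesis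
  proof (rule ST.linear_eq_on[where f="\<lambda>x. brT (tp x y) (tp x' y')"
        and g="\<lambda>x. tp x (br y x' y') + t (\<epsilon> b (a' + b')) (tp (br x x' y') y)"])
    show "x \<in> S.span (B a)" using x VB by simp
    show "Vector_Spaces.linear s t (\<lambda>x. brT (tp x y) (tp x' y'))" by (rule linST) (simp_all add: linsimps)
    show "Vector_Spaces.linear s t (\<lambda>x. tp x (br y x' y') + t (\<epsilon> b (a' + b')) (tp (br x x' y') y))" by (rule linST) (simp_all add: linsimps mult.commute add_ac)
  qed (use s1 y x' y' in auto)
qed




lemmas epsx = eps_l eps_r

lemma core_assoc:
  assumes x: "x \<in> V a" and y: "y \<in> V b" and x': "x' \<in> V c" and y': "y' \<in> V d"
    and u: "u \<in> V e" and v: "v \<in> V f"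
  shows "mulT (mulT (tp x y) (tp x' y')) (tp u v) = mulT (tp x y) (mulT (tp x' y') (tp u v))"
proof -
  note 1 = mulT_hom[OF x y x' y']
  note 2 = mulT_hom[OF mul_deg[OF x x'] mul_deg[OF y y'] u v]
  note 3 = mulT_hom[OF x' y' u v]
  note 4 = mulT_hom[OF x y mul_deg[OF x' u] mul_deg[OF y' v]]
  show ?thesis by (simp only: 1 2 3 4 mulT_lin TT.scale_scale mul_assoc epsx mult_ac)
qed

lemma core_pois:
  assumes x: "x \<in> V a" and y: "y \<in> V b" and x': "x' \<in> V c" and y': "y' \<in> V d"
    and u: "u \<in> V e" and v: "v \<in> V f"
  shows "brT (mulT (tp x y) (tp x' y')) (tp u v) =
         mulT (tp x y) (brT (tp x' y') (tp u v)) + t (\<epsilon> (c + d) (e + f)) (mulT (brT (tp x y) (tp u v)) (tp x' y'))"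
proof -
  let ?T1 = "tp (mul x x') (mul y (br y' u v))"
  let ?T2 = "tp (mul x x') (mul (br y u v) y')"
  let ?T3 = "tp (mul x (br x' u v)) (mul y y')"
  let ?T4 = "tp (mul (br x u v) x') (mul y y')"
  have L: "brT (mulT (tp x y) (tp x' y')) (tp u v) =
     t (\<epsilon> b c) ?T1 + t (\<epsilon> b c * \<epsilon> d (e + f)) ?T2 + t (\<epsilon> b c * \<epsilon> (b + d) (e + f)) ?T3
     + t (\<epsilon> b c * \<epsilon> (b + d) (e + f) * \<epsilon> c (e + f)) ?T4"
  proof -
    note 1 = mulT_hom[OF x y x' y']
    note 2 = brT_hom[OF mul_deg[OF x x'] mul_deg[OF y y'] u v]
    note 3 = br_mul[OF y y' u v]
    note 4 = br_mul[OF x x' u v]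
    show ?thesis by (simp only: 1 2 3 4 linsimps epsx mult_ac add_ac)
  qed
  have R: "mulT (tp x y) (brT (tp x' y') (tp u v)) + t (\<epsilon> (c + d) (e + f)) (mulT (brT (tp x y) (tp u v)) (tp x' y')) =
     t (\<epsilon> b c) ?T1 + t (\<epsilon> (c + d) (e + f) * \<epsilon> (b + e + f) c) ?T2 + t (\<epsilon> d (e + f) * \<epsilon> b (c + e + f)) ?T3
     + t (\<epsilon> (c + d) (e + f) * \<epsilon> b (e + f) * \<epsilon> b c) ?T4"
  proof -
    note 1 = brT_hom[OF x' y' u v]
    note 2 = mulT_hom[OF x y x' br_deg[OF y' u v]]
    note 3 = mulT_hom[OF x y br_deg[OF x' u v] y']
    note 4 = brT_hom[OF x y u v]
    note 5 = mulT_hom[OF x br_deg[OF y u v] x' y']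
    note 6 = mulT_hom[OF br_deg[OF x u v] y x' y']
    show ?thesis by (simp only: 1 2 3 4 5 6 linsimps epsx mult_ac add_ac)
  qed
  have c2: "\<epsilon> b c * \<epsilon> d (e + f) = \<epsilon> (c + d) (e + f) * \<epsilon> (b + e + f) c"
  proof -
    have "\<epsilon> (c + d) (e + f) * \<epsilon> (b + e + f) c = \<epsilon> b c * \<epsilon> d (e + f) * (\<epsilon> c (e + f) * \<epsilon> (e + f) c)"
      by (simp only: eps_l[of c d] eps_l[of "b + e" f] eps_l[of b e] eps_l[of e f, symmetric] mult_ac)
    then show ?thesis by (simp only: eps_sk mult_1_right)
  qed
  have c3: "\<epsilon> b c * \<epsilon> (b + d) (e + f) = \<epsilon> d (e + f) * \<epsilon> b (c + e + f)"
    by (simp only: epsx mult_ac)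
  have c4: "\<epsilon> b c * \<epsilon> (b + d) (e + f) * \<epsilon> c (e + f) = \<epsilon> (c + d) (e + f) * \<epsilon> b (e + f) * \<epsilon> b c"
    by (simp only: epsx mult_ac)
  show ?thesis unfolding L R by (subst c4, subst c2, subst c3, rule refl)
qed

lemma core_leib:
  assumes x: "x \<in> V a" and y: "y \<in> V b" and x': "x' \<in> V c" and y': "y' \<in> V d"
    and u: "u \<in> V e" and v: "v \<in> V f"
  shows "brT (brT (tp x y) (tp x' y')) (tp u v) =
         brT (tp x y) (brT (tp x' y') (tp u v)) + t (\<epsilon> (c + d) (e + f)) (brT (brT (tp x y) (tp u v)) (tp x' y'))"
proof -
  let ?P1 = "tp x (br y x' (br y' u v))"
  let ?P2 = "tp x (br y (br x' u v) y')"
  let ?P3 = "tp x (br (br y u v) x' y')"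
  let ?Q1 = "tp (br x x' (br y' u v)) y"
  let ?Q2 = "tp (br x (br x' u v) y') y"
  let ?Q3 = "tp (br (br x u v) x' y') y"
  let ?C1 = "tp (br x u v) (br y x' y')"
  let ?C2 = "tp (br x x' y') (br y u v)"
  have L: "brT (brT (tp x y) (tp x' y')) (tp u v) =
     ?P1 + t (\<epsilon> b (c + (d + e + f))) ?Q1 + t (\<epsilon> d (e + f)) ?P2 + t (\<epsilon> d (e + f) * \<epsilon> b (c + e + f + d)) ?Q2
     + t (\<epsilon> (c + d) (e + f)) ?P3 + t (\<epsilon> b (c + d)) ?C2 + t (\<epsilon> (c + d) (e + f) * \<epsilon> b (e + f)) ?C1
     + t (\<epsilon> (c + d) (e + f) * \<epsilon> b (e + f) * \<epsilon> b (c + d)) ?Q3"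
  proof -
    note 1 = brT_hom[OF x y x' y']
    note 2 = brT_hom[OF x br_deg[OF y x' y'] u v]
    note 3 = brT_hom[OF br_deg[OF x x' y'] y u v]
    note 4 = br_id[OF y x' y' u v]
    note 5 = br_id[OF x x' y' u v]
    show ?thesis by (simp only: 1 2 3 4 5 linsimps epsx mult_ac add_ac)
  qed
  have R: "brT (tp x y) (brT (tp x' y') (tp u v)) + t (\<epsilon> (c + d) (e + f)) (brT (brT (tp x y) (tp u v)) (tp x' y')) =
     ?P1 + t (\<epsilon> b (c + (d + e + f))) ?Q1 + t (\<epsilon> d (e + f)) ?P2 + t (\<epsilon> d (e + f) * \<epsilon> b (c + e + f + d)) ?Q2
     + t (\<epsilon> (c + d) (e + f)) ?P3 + t (\<epsilon> (c + d) (e + f) * \<epsilon> (b + e + f) (c + d)) ?C2 + t (\<epsilon> (c + d) (e + f) * \<epsilon> b (e + f)) ?C1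
     + t (\<epsilon> (c + d) (e + f) * \<epsilon> b (e + f) * \<epsilon> b (c + d)) ?Q3"
  proof -
    note 1 = brT_hom[OF x' y' u v]
    note 2 = brT_hom[OF x y x' br_deg[OF y' u v]]
    note 3 = brT_hom[OF x y br_deg[OF x' u v] y']
    note 4 = brT_hom[OF x y u v]
    note 5 = brT_hom[OF x br_deg[OF y u v] x' y']
    note 6 = brT_hom[OF br_deg[OF x u v] y x' y']
    show ?thesis by (simp only: 1 2 3 4 5 6 linsimps epsx mult_ac add_ac)
  qed
  have c2: "\<epsilon> (c + d) (e + f) * \<epsilon> (b + e + f) (c + d) = \<epsilon> b (c + d)"
  proof -
    have "\<epsilon> (c + d) (e + f) * \<epsilon> (b + e + f) (c + d) = \<epsilon> b (c + d) * (\<epsilon> (c + d) (e + f) * \<epsilon> (e + f) (c + d))"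
      by (simp only: eps_l[of "b + e" f] eps_l[of b e] eps_l[of e f, symmetric] mult_ac)
    then show ?thesis by (simp only: eps_sk mult_1_right)
  qed
  show ?thesis unfolding L R c2 ..
qed




abbreviation TG where "TG \<equiv> tensor_grading t V tp"
definition Gen :: "'g \<Rightarrow> 't set" where
  "Gen c = {tp x y | x y a b. x \<in> V a \<and> y \<in> V b \<and> a + b = c}"
lemma TG_def': "TG c = TT.span (Gen c)" unfolding tensor_grading_def Gen_def by simp

lemma linTT: "(\<And>x y. f (x + y) = f x + f y) \<Longrightarrow> (\<And>c x. f (t c x) = t c (f x)) \<Longrightarrow> Vector_Spaces.linear t t f"
  unfolding Vector_Spaces.linear_iff using vsT by blast

lemma eq_span3:
  assumes lF1: "\<And>y z. Vector_Spaces.linear t t (\<lambda>x. F x y z)" and lG1: "\<And>y z. Vector_Spaces.linear t t (\<lambda>x. G x y z)"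
    and lF2: "\<And>x z. Vector_Spaces.linear t t (\<lambda>y. F x y z)" and lG2: "\<And>x z. Vector_Spaces.linear t t (\<lambda>y. G x y z)"
    and lF3: "\<And>x y. Vector_Spaces.linear t t (\<lambda>z. F x y z)" and lG3: "\<And>x y. Vector_Spaces.linear t t (\<lambda>z. G x y z)"
    and gen: "\<And>x y z. x \<in> X \<Longrightarrow> y \<in> Y \<Longrightarrow> z \<in> Z \<Longrightarrow> F x y z = G x y z"
    and x: "x \<in> TT.span X" and y: "y \<in> TT.span Y" and z: "z \<in> TT.span Z"
  shows "F x y z = G x y z"
proof -
  have 1: "F x1 y1 z1 = G x1 y1 z1" if "x1 \<in> X" "y1 \<in> Y" "z1 \<in> TT.span Z" for x1 y1 z1
    by (rule T2.linear_eq_on[OF lF3 lG3 that(3)]) (use gen that in auto)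
  have 2: "F x1 y1 z1 = G x1 y1 z1" if "x1 \<in> X" "y1 \<in> TT.span Y" "z1 \<in> TT.span Z" for x1 y1 z1
    by (rule T2.linear_eq_on[where f="\<lambda>y. F x1 y z1" and g="\<lambda>y. G x1 y z1", OF lF2 lG2 that(2)]) (use 1 that in auto)
  show ?thesis
    by (rule T2.linear_eq_on[where f="\<lambda>x. F x y z" and g="\<lambda>x. G x y z", OF lF1 lG1 x]) (use 2 y z in auto)
qed

lemma GenD: "w \<in> Gen c \<Longrightarrow> \<exists>x y a b. w = tp x y \<and> x \<in> V a \<and> y \<in> V b \<and> a + b = c"
  unfolding Gen_def by blast
lemma GenI: "x \<in> V a \<Longrightarrow> y \<in> V b \<Longrightarrow> a + b = c \<Longrightarrow> tp x y \<in> Gen c"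
  unfolding Gen_def by blast

lemma mulT_even: "x \<in> TG a \<Longrightarrow> y \<in> TG b \<Longrightarrow> mulT x y \<in> TG (a + b)"
  unfolding TG_def'
proof (rule bil_span[OF vsT vsT mulT_bil TT.subspace_span])
  fix w1 w2 assume w1: "w1 \<in> Gen a" and w2: "w2 \<in> Gen b"
  obtain x1 y1 a1 b1 where 1: "w1 = tp x1 y1" "x1 \<in> V a1" "y1 \<in> V b1" "a1 + b1 = a" using GenD[OF w1] by blast
  obtain x2 y2 a2 b2 where 2: "w2 = tp x2 y2" "x2 \<in> V a2" "y2 \<in> V b2" "a2 + b2 = b" using GenD[OF w2] by blast
  have "tp (mul x1 x2) (mul y1 y2) \<in> Gen (a + b)"
    by (rule GenI[OF mul_deg[OF 1(2) 2(2)] mul_deg[OF 1(3) 2(3)]]) (simp add: 1(4)[symmetric] 2(4)[symmetric] add_ac)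
  then show "mulT w1 w2 \<in> TT.span (Gen (a + b))"
    unfolding 1(1) 2(1) mulT_hom[OF 1(2,3) 2(2,3)] by (intro TT.span_scale TT.span_base)
qed

lemma brT_even: "x \<in> TG a \<Longrightarrow> y \<in> TG b \<Longrightarrow> brT x y \<in> TG (a + b)"
  unfolding TG_def'
proof (rule bil_span[OF vsT vsT brT_bil TT.subspace_span])
  fix w1 w2 assume w1: "w1 \<in> Gen a" and w2: "w2 \<in> Gen b"
  obtain x1 y1 a1 b1 where 1: "w1 = tp x1 y1" "x1 \<in> V a1" "y1 \<in> V b1" "a1 + b1 = a" using GenD[OF w1] by blast
  obtain x2 y2 a2 b2 where 2: "w2 = tp x2 y2" "x2 \<in> V a2" "y2 \<in> V b2" "a2 + b2 = b" using GenD[OF w2] by blast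
  have "tp x1 (br y1 x2 y2) \<in> Gen (a + b)"
    by (rule GenI[OF 1(2) br_deg[OF 1(3) 2(2) 2(3)]]) (simp add: 1(4)[symmetric] 2(4)[symmetric] add_ac)
  moreover have "tp (br x1 x2 y2) y1 \<in> Gen (a + b)"
    by (rule GenI[OF br_deg[OF 1(2) 2(2) 2(3)] 1(3)]) (simp add: 1(4)[symmetric] 2(4)[symmetric] add_ac)
  ultimately show "brT w1 w2 \<in> TT.span (Gen (a + b))"
    unfolding 1(1) 2(1) brT_hom[OF 1(2,3) 2(2,3)] by (intro TT.span_add TT.span_scale TT.span_base)
qed

lemma TG_leib: "x \<in> TG a \<Longrightarrow> y \<in> TG b \<Longrightarrow> z \<in> TG c \<Longrightarrow>
   brT (brT x y) z = brT x (brT y z) + t (\<epsilon> b c) (brT (brT x z) y)"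
  unfolding TG_def'
proof (rule eq_span3[where F="\<lambda>x y z. brT (brT x y) z" and G="\<lambda>x y z. brT x (brT y z) + t (\<epsilon> b c) (brT (brT x z) y)"])
  fix w1 w2 w3 assume w1: "w1 \<in> Gen a" and w2: "w2 \<in> Gen b" and w3: "w3 \<in> Gen c"
  obtain x1 y1 a1 b1 where 1: "w1 = tp x1 y1" "x1 \<in> V a1" "y1 \<in> V b1" "a1 + b1 = a" using GenD[OF w1] by blast
  obtain x2 y2 a2 b2 where 2: "w2 = tp x2 y2" "x2 \<in> V a2" "y2 \<in> V b2" "a2 + b2 = b" using GenD[OF w2] by blast
  obtain x3 y3 a3 b3 where 3: "w3 = tp x3 y3" "x3 \<in> V a3" "y3 \<in> V b3" "a3 + b3 = c" using GenD[OF w3] by blast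
  show "brT (brT w1 w2) w3 = brT w1 (brT w2 w3) + t (\<epsilon> b c) (brT (brT w1 w3) w2)"
    using core_leib[OF 1(2,3) 2(2,3) 3(2,3)] unfolding 1(1) 2(1) 3(1) 2(4) 3(4) .
qed (rule linTT; simp add: brT_lin TT.scale_right_distrib TT.scale_scale mult.commute add_ac)+

lemma TG_pois: "x \<in> TG a \<Longrightarrow> y \<in> TG b \<Longrightarrow> z \<in> TG c \<Longrightarrow>
   brT (mulT x y) z = mulT x (brT y z) + t (\<epsilon> b c) (mulT (brT x z) y)"
  unfolding TG_def'
proof (rule eq_span3[where F="\<lambda>x y z. brT (mulT x y) z" and G="\<lambda>x y z. mulT x (brT y z) + t (\<epsilon> b c) (mulT (brT x z) y)"])
  fix w1 w2 w3 assume w1: "w1 \<in> Gen a" and w2: "w2 \<in> Gen b" and w3: "w3 \<in> Gen c"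
  obtain x1 y1 a1 b1 where 1: "w1 = tp x1 y1" "x1 \<in> V a1" "y1 \<in> V b1" "a1 + b1 = a" using GenD[OF w1] by blast
  obtain x2 y2 a2 b2 where 2: "w2 = tp x2 y2" "x2 \<in> V a2" "y2 \<in> V b2" "a2 + b2 = b" using GenD[OF w2] by blast
  obtain x3 y3 a3 b3 where 3: "w3 = tp x3 y3" "x3 \<in> V a3" "y3 \<in> V b3" "a3 + b3 = c" using GenD[OF w3] by blast
  show "brT (mulT w1 w2) w3 = mulT w1 (brT w2 w3) + t (\<epsilon> b c) (mulT (brT w1 w3) w2)"
    using core_pois[OF 1(2,3) 2(2,3) 3(2,3)] unfolding 1(1) 2(1) 3(1) 2(4) 3(4) .
qed (rule linTT; simp add: brT_lin mulT_lin TT.scale_right_distrib TT.scale_scale mult.commute add_ac)+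

definition GenAll :: "'t set" where "GenAll = {tp x y | x y a b. x \<in> V a \<and> y \<in> V b}"

lemma GenAll_span: "TT.span GenAll = UNIV"
proof -
  have "BT \<subseteq> GenAll" unfolding BT_def GenAll_def using BA_hom by blast
  then have "TT.span BT \<subseteq> TT.span GenAll" by (rule TT.span_mono)
  then show ?thesis using BT_span by auto
qed

lemma TT_assoc: "mulT (mulT x y) z = mulT x (mulT y z)"
proof (rule eq_span3[where F="\<lambda>x y z. mulT (mulT x y) z" and G="\<lambda>x y z. mulT x (mulT y z)" and X=GenAll and Y=GenAll and Z=GenAll])
  fix w1 w2 w3 assume w1: "w1 \<in> GenAll" and w2: "w2 \<in> GenAll" and w3: "w3 \<in> GenAll"
  obtain x1 y1 a1 b1 where 1: "w1 = tp x1 y1" "x1 \<in> V a1" "y1 \<in> V b1" using w1 unfolding GenAll_def by blast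
  obtain x2 y2 a2 b2 where 2: "w2 = tp x2 y2" "x2 \<in> V a2" "y2 \<in> V b2" using w2 unfolding GenAll_def by blast
  obtain x3 y3 a3 b3 where 3: "w3 = tp x3 y3" "x3 \<in> V a3" "y3 \<in> V b3" using w3 unfolding GenAll_def by blast
  show "mulT (mulT w1 w2) w3 = mulT w1 (mulT w2 w3)"
    using core_assoc[OF 1(2,3) 2(2,3) 3(2,3)] unfolding 1(1) 2(1) 3(1) .
qed (simp_all add: GenAll_span, (rule linTT; simp add: mulT_lin TT.scale_right_distrib TT.scale_scale mult.commute add_ac)+)




definition BTg :: "'g \<Rightarrow> 't set" where
  "BTg g = {tp b1 b2 | b1 b2. b1 \<in> BA \<and> b2 \<in> BA \<and> deg b1 + deg b2 = g}"
definition tdeg :: "'t \<Rightarrow> 'g" where "tdeg e = deg (fst (pr e)) + deg (snd (pr e))"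

lemma BTg_sub: "BTg g \<subseteq> BT" unfolding BTg_def BT_def by blast

lemma tdeg_BTg: "e \<in> BTg g \<Longrightarrow> tdeg e = g"
  unfolding BTg_def tdeg_def using pr_tp by auto

lemma BT_BTg: "e \<in> BT \<Longrightarrow> e \<in> BTg (tdeg e)"
proof -
  assume "e \<in> BT"
  then obtain b1 b2 where b: "b1 \<in> BA" "b2 \<in> BA" "e = tp b1 b2" unfolding BT_def by blast
  then have "tdeg e = deg b1 + deg b2" unfolding tdeg_def using pr_tp by simp
  moreover have "tp b1 b2 \<in> BTg (deg b1 + deg b2)" unfolding BTg_def using b(1,2) by blast
  ultimately show ?thesis using b(3) by simp
qed

lemma TG_span_BTg: "TG g = TT.span (BTg g)"
proof
  show "TT.span (BTg g) \<subseteq> TG g" unfolding TG_def'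
  proof (rule TT.span_mono, rule subsetI)
    fix w assume "w \<in> BTg g"
    then obtain b1 b2 where b: "b1 \<in> BA" "b2 \<in> BA" "deg b1 + deg b2 = g" "w = tp b1 b2"
      unfolding BTg_def by blast
    show "w \<in> Gen g" unfolding b(4) by (rule GenI[OF BA_hom[OF b(1)] BA_hom[OF b(2)] b(3)])
  qed
  show "TG g \<subseteq> TT.span (BTg g)" unfolding TG_def'
  proof (rule TT.span_minimal[OF _ TT.subspace_span])
    show "Gen g \<subseteq> TT.span (BTg g)"
    proof
      fix w assume "w \<in> Gen g"
      then obtain x y p q where w: "w = tp x y" "x \<in> V p" "y \<in> V q" "p + q = g" by (blast dest: GenD)
      show "w \<in> TT.span (BTg g)" unfolding w(1)
      proof (rule bil_span[OF vsS vsT tp_bil TT.subspace_span, of "{b \<in> BA. deg b = p}" "{b \<in> BA. deg b = q}"])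
        show "tp b1 b2 \<in> TT.span (BTg g)" if "b1 \<in> {b \<in> BA. deg b = p}" "b2 \<in> {c \<in> BA. deg c = q}" for b1 b2
          by (rule TT.span_base) (use that w(4) in \<open>unfold BTg_def, blast\<close>)
        show "x \<in> S.span {b \<in> BA. deg b = p}" using w(2) V_span by blast
        show "y \<in> S.span {c \<in> BA. deg c = q}" using w(3) V_span by blast
      qed
    qed
  qed
qed

lemma TG_decomp: "\<exists>F. finite {g. F g \<noteq> 0} \<and> (\<forall>g. F g \<in> TG g) \<and> v = (\<Sum>g\<in>{g. F g \<noteq> 0}. F g)"
proof -
  let ?R = "TT.representation BT v"
  define E where "E = {e. ?R e \<noteq> 0}"
  have finE: "finite E" unfolding E_def by (rule TT.finite_representation)
  have EBT: "E \<subseteq> BT" unfolding E_def using TT.representation_ne_zero by blast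
  define F where "F g = (\<Sum>e\<in>{e\<in>E. tdeg e = g}. t (?R e) e)" for g
  have FT: "F g \<in> TG g" for g
    unfolding F_def TG_span_BTg
  proof (rule TT.span_sum, rule TT.span_scale, rule TT.span_base)
    fix e assume "e \<in> {e\<in>E. tdeg e = g}"
    then show "e \<in> BTg g" using EBT BT_BTg by auto
  qed
  have supp: "{g. F g \<noteq> 0} \<subseteq> tdeg ` E"
  proof
    fix g assume g: "g \<in> {g. F g \<noteq> 0}"
    show "g \<in> tdeg ` E"
    proof (rule ccontr)
      assume "g \<notin> tdeg ` E"
      then have "{e\<in>E. tdeg e = g} = {}" by auto
      then have "F g = 0" unfolding F_def by (simp only: sum.empty)
      then show False using g by simp
    qed
  qed
  have finF: "finite {g. F g \<noteq> 0}" using supp finE finite_subset by blast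
  have "(\<Sum>g\<in>{g. F g \<noteq> 0}. F g) = (\<Sum>g\<in>tdeg ` E. F g)"
    by (rule sum.mono_neutral_left) (use supp finE in auto)
  also have "\<dots> = (\<Sum>e\<in>E. t (?R e) e)"
    unfolding F_def by (rule sum.image_gen[symmetric]) (rule finE)
  also have "\<dots> = v" unfolding E_def by (rule TT.sum_nonzero_representation_eq[OF BT_indep]) (simp add: BT_span)
  finally show ?thesis using finF FT by metis
qed

lemma TG_direct:
  assumes fin: "finite {g. F g \<noteq> 0}" and FT: "\<forall>g. F g \<in> TG g" and s0: "(\<Sum>g\<in>{g. F g \<noteq> 0}. F g) = 0"
  shows "F g0 = 0"
proof -
  let ?S = "{g. F g \<noteq> 0}"
  let ?R = "TT.representation BT"
  have loc: "?R (F h) e = 0" if "e \<notin> BTg h" for h e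
  proof -
    have "F h \<in> TT.span (BTg h)" using FT TG_span_BTg by blast
    then have "?R (F h) = TT.representation (BTg h) (F h)"
      by (rule TT.representation_extend[OF BT_indep _ BTg_sub])
    then show ?thesis using TT.representation_ne_zero[of "BTg h" "F h" e] that by auto
  qed
  have "?R (\<Sum>g\<in>?S. F g) = (\<lambda>e. \<Sum>g\<in>?S. ?R (F g) e)"
    by (rule TT.representation_sum[OF BT_indep]) (simp add: BT_span)
  then have sum0: "(\<Sum>g\<in>?S. ?R (F g) e) = 0" for e using s0 TT.representation_zero by metis
  have "?R (F g0) e = 0" for e
  proof (cases "e \<in> BTg g0 \<and> g0 \<in> ?S")
    case True
    have "(\<Sum>g\<in>?S. ?R (F g) e) = (\<Sum>g\<in>?S. if g = g0 then ?R (F g0) e else 0)"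
    proof (rule sum.cong[OF refl])
      fix g assume "g \<in> ?S"
      show "?R (F g) e = (if g = g0 then ?R (F g0) e else 0)"
      proof (cases "g = g0")
        case False
        then have "e \<notin> BTg g" using True tdeg_BTg by metis
        then show ?thesis using loc False by simp
      qed simp
    qed
    also have "\<dots> = ?R (F g0) e" using fin True by simp
    finally show ?thesis using sum0 by simp
  next
    case False
    then have "e \<notin> BTg g0 \<or> g0 \<notin> ?S" by blast
    then show ?thesis
    proof
      assume "e \<notin> BTg g0" then show ?thesis by (rule loc)
    next
      assume "g0 \<notin> ?S" then have "F g0 = 0" by simp
      then show ?thesis by (simp add: TT.representation_zero)
    qed
  qed
  then have "{e. ?R (F g0) e \<noteq> 0} = {}" by simp
  moreover have "(\<Sum>e | ?R (F g0) e \<noteq> 0. t (?R (F g0) e) e) = F g0"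
    by (rule TT.sum_nonzero_representation_eq[OF BT_indep]) (simp add: BT_span)
  ultimately show ?thesis by simp
qed

lemma TG_graded: "graded_space t TG"
  unfolding graded_space_def
proof (intro conjI allI impI)
  show "vector_space t" by (rule vsT)
  show "TT.subspace (TG g)" for g unfolding TG_def' by simp
  show "\<exists>F. finite {g. F g \<noteq> 0} \<and> (\<forall>g. F g \<in> TG g) \<and> v = (\<Sum>g\<in>{g. F g \<noteq> 0}. F g)" for v
    by (rule TG_decomp)
  show "F g = 0" if "finite {g. F g \<noteq> 0} \<and> (\<forall>g. F g \<in> TG g) \<and> (\<Sum>g\<in>{g. F g \<noteq> 0}. F g) = 0" for F g
    using TG_direct that by blast
qed

lemma LP: "LP_color_algebra t TG mulT brT \<epsilon>"
  unfolding LP_color_algebra_def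
proof (intro conjI)
  show "graded_space t TG" by (rule TG_graded)
  show "bilinear_map t t mulT" by (rule mulT_bil)
  show "bilinear_map t t brT" by (rule brT_bil)
  show "even2 TG mulT" unfolding even2_def using mulT_even by blast
  show "even2 TG brT" unfolding even2_def using brT_even by blast
  show "\<forall>x y z. mulT (mulT x y) z = mulT x (mulT y z)" using TT_assoc by blast
  show "\<forall>a b c x y z. x \<in> TG a \<longrightarrow> y \<in> TG b \<longrightarrow> z \<in> TG c \<longrightarrow>
        brT (brT x y) z = brT x (brT y z) + t (\<epsilon> b c) (brT (brT x z) y)"
    by (intro allI impI) (rule TG_leib)
  show "\<forall>a b c x y z. x \<in> TG a \<longrightarrow> y \<in> TG b \<longrightarrow> z \<in> TG c \<longrightarrow>
        brT (mulT x y) z = mulT x (brT y z) + t (\<epsilon> b c) (mulT (brT x z) y)"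
    by (intro allI impI) (rule TG_pois)
qed

lemma main: "\<exists>mulT brT.
     bilinear_map t t mulT \<and> bilinear_map t t brT \<and>
     (\<forall>a b a' b' x y x' y'. x \<in> V a \<longrightarrow> y \<in> V b \<longrightarrow> x' \<in> V a' \<longrightarrow> y' \<in> V b' \<longrightarrow>
        mulT (tp x y) (tp x' y') = t (\<epsilon> b a') (tp (mul x x') (mul y y')) \<and>
        brT (tp x y) (tp x' y') = tp x (br y x' y') + t (\<epsilon> b (a' + b')) (tp (br x x' y') y)) \<and>
     LP_color_algebra t (tensor_grading t V tp) mulT brT \<epsilon>"
proof -
  have H: "\<forall>a b a' b' x y x' y'. x \<in> V a \<longrightarrow> y \<in> V b \<longrightarrow> x' \<in> V a' \<longrightarrow> y' \<in> V b' \<longrightarrow>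
        mulT (tp x y) (tp x' y') = t (\<epsilon> b a') (tp (mul x x') (mul y y')) \<and>
        brT (tp x y) (tp x' y') = tp x (br y x' y') + t (\<epsilon> b (a' + b')) (tp (br x x' y') y)"
  proof (intro allI impI conjI)
    fix a b a' b' x y x' y'
    assume h: "x \<in> V a" "y \<in> V b" "x' \<in> V a'" "y' \<in> V b'"
    show "mulT (tp x y) (tp x' y') = t (\<epsilon> b a') (tp (mul x x') (mul y y'))" by (rule mulT_hom[OF h])
    show "brT (tp x y) (tp x' y') = tp x (br y x' y') + t (\<epsilon> b (a' + b')) (tp (br x x' y') y)" by (rule brT_hom[OF h])
  qed
  show ?thesis
    apply (rule exI[of _ mulT], rule exI[of _ brT])
    apply (intro conjI)
       apply (rule mulT_bil)
      apply (rule brT_bil)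
     apply (rule H)
    apply (rule LP)
    done
qed


end

theorem mainTheorem17:
  fixes s :: "'k::field \<Rightarrow> 'a::ab_group_add \<Rightarrow> 'a"
    and V :: "'g::ab_group_add \<Rightarrow> 'a set"
    and mul :: "'a \<Rightarrow> 'a \<Rightarrow> 'a"
    and br :: "'a \<Rightarrow> 'a \<Rightarrow> 'a \<Rightarrow> 'a"
    and \<epsilon> :: "'g \<Rightarrow> 'g \<Rightarrow> 'k"
    and t :: "'k \<Rightarrow> 't::ab_group_add \<Rightarrow> 't"
    and tp :: "'a \<Rightarrow> 'a \<Rightarrow> 't"
  assumes char: "(2::'k) \<noteq> 0"
    and eps: "skew_bicharacter \<epsilon>"
    and A: "ternary_LP_color_algebra s V mul br \<epsilon>"
    and T: "tensor_product s t tp"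
  shows "\<exists>mulT brT.
     bilinear_map t t mulT \<and> bilinear_map t t brT \<and>
     (\<forall>a b a' b' x y x' y'. x \<in> V a \<longrightarrow> y \<in> V b \<longrightarrow> x' \<in> V a' \<longrightarrow> y' \<in> V b' \<longrightarrow>
        mulT (tp x y) (tp x' y') = t (\<epsilon> b a') (tp (mul x x') (mul y y')) \<and>
        brT (tp x y) (tp x' y') = tp x (br y x' y') + t (\<epsilon> b (a' + b')) (tp (br x x' y') y)) \<and>
     LP_color_algebra t (tensor_grading t V tp) mulT brT \<epsilon>"
proof -
  interpret tlp s V mul br \<epsilon> t tp by (rule tlp.intro[OF eps A T])
  show ?thesis by (rule main)
qed

end
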